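(* For every finite alphabet $\Sigma$, $L_{\mathrm{UNIQ}}=\Sigma^*\setminus L_{\mathrm{OBST}}$.
   Context: Let $\Sigma$ be a finite alphabet and $\$\notin\Sigma$ a delimiter symbol; $\Sigma_\$=\Sigma\cup\{\$\}$. The bigram map $\Phi$ sends a string $z\in\$\Sigma^*\$$ to the vector $\Phi(z)\in\mathbb{N}^{\Sigma_\$^2}$ whose $(i,j)$ entry is the number of positions at which the two-letter string $ij$ occurs as a contiguous factor of $z$ (counting overlaps). $L_{\mathrm{UNIQ}}$ is the set of $w\in\Sigma^*$ such that the only $z\in\$\Sigma^*\$$ with $\Phi(z)=\Phi(\$w\$)$ is $z=\$w\$$ ("uniquely decodable" strings). For $x\in\Sigma$ write $\Sigma_{\neg x}=\Sigma\setminus\{x\}$. For $x\in\Sigma$ and $a,b\in\Sigma_{\neg x}$ (with $a=b$ allowed) define $I_{x,a,b}=\Sigma^*\,a\,x\,\Sigma_{\neg a}^*\,b\,\Sigma^*$, $J_{x,a,b}=\Sigma^*\,a\,\Sigma_{\neg x}^*\,b\,\Sigma^*$ (regular-expression notation), $K_{x,a,b}=I_{x,a,b}\cap J_{x,a,b}$, and $L_{\mathrm{OBST}}=\bigcup_{x\in\Sigma}\bigcup_{a,b\in\Sigma_{\neg x}}K_{x,a,b}$. *)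

theory Defs
  imports Main
begin

text \<open>Alphabet: a finite type 'a. Extended alphabet \<Sigma>_$ is 'a option, with None the delimiter $.\<close>

definition delim :: "'a list \<Rightarrow> 'a option list" where
  "delim w = [None] @ map Some w @ [None]"

definition bigram :: "'b list \<Rightarrow> ('b \<times> 'b) \<Rightarrow> nat" where
  "bigram z = (\<lambda>(i, j). card {k. Suc k < length z \<and> z ! k = i \<and> z ! Suc k = j})"

definition L_UNIQ :: "('a::finite) list set" where
  "L_UNIQ = {w. \<forall>z. (\<exists>v. z = delim v) \<and> bigram z = bigram (delim w) \<longrightarrow> z = delim w}"

definition I_lang :: "'a \<Rightarrow> 'a \<Rightarrow> 'a \<Rightarrow> 'a list set" where
  "I_lang x a b = {u @ [a, x] @ m @ [b] @ v | u m v. set m \<subseteq> - {a}}"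

definition J_lang :: "'a \<Rightarrow> 'a \<Rightarrow> 'a \<Rightarrow> 'a list set" where
  "J_lang x a b = {u @ [a] @ m @ [b] @ v | u m v. set m \<subseteq> - {x}}"

definition K_lang :: "'a \<Rightarrow> 'a \<Rightarrow> 'a \<Rightarrow> 'a list set" where
  "K_lang x a b = I_lang x a b \<inter> J_lang x a b"

definition L_OBST :: "('a::finite) list set" where
  "L_OBST = (\<Union>x. \<Union>a\<in>- {x}. \<Union>b\<in>- {x}. K_lang x a b)"

end

theory Submission
  imports Defs "HOL-Library.Multiset"
begin

definition bg :: "'b list \<Rightarrow> ('b \<times> 'b) multiset" where
  "bg s = mset (zip s (tl s))"

definition ext1 :: "'a list \<Rightarrow> 'a option list" where
  "ext1 w = map Some w @ [None]"

lemma bg_Nil[simp]: "bg [] = {#}" by (simp add: bg_def)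
lemma bg_single[simp]: "bg [x] = {#}" by (simp add: bg_def)
lemma bg_Cons2[simp]: "bg (x # y # r) = add_mset (x, y) (bg (y # r))" by (simp add: bg_def)
lemma bg_Cons: "v \<noteq> [] \<Longrightarrow> bg (x # v) = add_mset (x, hd v) (bg v)"
  by (cases v) (simp_all add: bg_def)
lemma size_bg: "size (bg s) = length s - 1" by (simp add: bg_def)

lemma bg_append: "u \<noteq> [] \<Longrightarrow> v \<noteq> [] \<Longrightarrow> bg (u @ v) = bg u + bg v + {#(last u, hd v)#}"
proof (induction u)
  case Nil then show ?case by simp
next
  case (Cons x u)
  show ?case
  proof (cases "u = []")
    case True then show ?thesis using Cons.prems by (simp add: bg_Cons)
  next
    case False
    then have "bg ((x # u) @ v) = add_mset (x, hd u) (bg (u @ v))"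
      by (simp add: bg_Cons)
    also have "\<dots> = add_mset (x, hd u) (bg u + bg v + {#(last u, hd v)#})"
      using Cons False by simp
    finally show ?thesis using False by (simp add: bg_Cons)
  qed
qed

lemma bigram_bg: fixes z :: "'b list" shows "bigram z = (\<lambda>p. count (bg z) p)"
proof
  fix p :: "'b \<times> 'b"
  obtain i j where p: "p = (i, j)" by fastforce
  have "count (bg z) p = length (filter (\<lambda>y. p = y) (zip z (tl z)))"
    by (simp add: bg_def count_mset count_list_eq_length_filter)
  also have "\<dots> = card {k. k < length (zip z (tl z)) \<and> p = zip z (tl z) ! k}"
    by (simp add: length_filter_conv_card)
  also have "{k. k < length (zip z (tl z)) \<and> p = zip z (tl z) ! k} = {k. Suc k < length z \<and> z ! k = i \<and> z ! Suc k = j}"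
    by (auto simp: p nth_tl)
  finally show "bigram z p = count (bg z) p" by (simp add: bigram_def p)
qed

lemma bigram_eq_iff: "bigram z = bigram z' \<longleftrightarrow> bg z = bg z'"
  by (simp add: bigram_bg multiset_eq_iff fun_eq_iff)

lemma swap_bg:
  assumes "A \<noteq> []" "B \<noteq> []" "\<beta> \<noteq> []" "hd A = hd B" "hd (M @ B) = hd \<beta>"
  shows "bg (\<alpha> @ A @ M @ B @ \<beta>) = bg (\<alpha> @ B @ M @ A @ \<beta>)"
proof -
  have 1: "bg (A @ M @ B @ \<beta>) = bg (B @ M @ A @ \<beta>)"
  proof (cases "M = []")
    case True then show ?thesis using assms by (simp add: bg_append ac_simps)
  next
    case False then show ?thesis using assms by (simp add: bg_append ac_simps)
  qed
  show ?thesis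
  proof (cases "\<alpha> = []")
    case True then show ?thesis using 1 by simp
  next
    case False then show ?thesis using 1 assms
      by (simp add: bg_append)
  qed
qed

lemma swap_idx:
  fixes w :: "'a list"
  assumes "p < q" "q \<le> r" "r < s" "s < length w" "w!p = w!r" "w!q = w!s" "w!(Suc p) \<noteq> w!(Suc r)"
  shows "\<exists>v. v \<noteq> w \<and> bg (None # ext1 v) = bg (None # ext1 w)"
proof -
  define \<alpha> where "\<alpha> = take p w"
  define A where "A = take (q-p) (drop p w)"
  define M where "M = take (r-q) (drop q w)"
  define B where "B = take (s-r) (drop r w)"
  define \<beta> where "\<beta> = drop s w"
  have w: "w = \<alpha> @ A @ M @ B @ \<beta>"
  proof -
    have "take q w = \<alpha> @ A" using take_add[of p "q-p" w] assms unfolding \<alpha>_def A_def by simp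
    moreover have "take r w = take q w @ M" using take_add[of q "r-q" w] assms unfolding M_def by simp
    moreover have "take s w = take r w @ B" using take_add[of r "s-r" w] assms unfolding B_def by simp
    ultimately show ?thesis by (metis append_assoc append_take_drop_id \<beta>_def)
  qed
  define v where "v = \<alpha> @ B @ M @ A @ \<beta>"
  have lens: "length \<alpha> = p" "length A = q - p" "length B = s - r" "length M = r - q"
    using assms by (simp_all add: \<alpha>_def A_def B_def M_def)
  have ne: "A \<noteq> []" "B \<noteq> []" "\<beta> \<noteq> []" using lens assms by (auto simp: \<beta>_def)
  have hdA: "hd A = w!p" using assms by (simp add: A_def hd_take hd_drop_conv_nth)
  have hdB: "hd B = w!r" using assms by (simp add: B_def hd_take hd_drop_conv_nth)
  have hdb: "hd \<beta> = w!s" using assms by (simp add: \<beta>_def hd_drop_conv_nth)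
  have hdMB: "hd (M @ B) = w!q"
  proof (cases "q < r")
    case True
    then have "M \<noteq> []" using lens by auto
    moreover have "hd M = w!q" using True assms by (simp add: M_def hd_take hd_drop_conv_nth)
    ultimately show ?thesis by simp
  next
    case False
    then have "M = []" "q = r" using lens assms by auto
    then show ?thesis using hdB by simp
  qed
  have "bg ((None # map Some \<alpha>) @ map Some A @ map Some M @ map Some B @ (map Some \<beta> @ [None]))
      = bg ((None # map Some \<alpha>) @ map Some B @ map Some M @ map Some A @ (map Some \<beta> @ [None]))"
    apply (rule swap_bg)
    using ne hdA hdB hdb hdMB assms by (simp_all add: hd_map flip: map_append)
  then have bgeq: "bg (None # ext1 v) = bg (None # ext1 w)"
    by (simp add: ext1_def v_def w)
  have "v ! Suc p = w ! Suc r"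
  proof -
    have "v ! Suc p = (B @ M @ A @ \<beta>) ! 1" using lens by (simp add: v_def nth_append)
    also have "\<dots> = w ! Suc r"
    proof (cases "Suc r < s")
      case True
      then have "(B @ M @ A @ \<beta>) ! 1 = B ! 1" using lens by (simp add: nth_append less_diff_conv)
      then show ?thesis using True assms by (simp add: B_def)
    next
      case False
      then have s: "s = Suc r" using assms by auto
      then have "B = [w!r]" using lens hdB by (cases B) auto
      then have "(B @ M @ A @ \<beta>) ! 1 = hd (M @ A @ \<beta>)" using ne by (simp add: hd_conv_nth)
      also have "\<dots> = w ! q"
      proof (cases "q < r")
        case True
        then have "M \<noteq> []" using lens by auto
        moreover have "hd M = w!q" using True assms by (simp add: M_def hd_take hd_drop_conv_nth)
        ultimately show ?thesis by simp
      next
        case False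
        then have "M = []" "q = r" using lens assms by auto
        then show ?thesis using hdA ne assms by simp
      qed
      finally show ?thesis using s assms by simp
    qed
    finally show ?thesis .
  qed
  then have "v \<noteq> w" using assms by auto
  then show ?thesis using bgeq by blast
qed

lemma delim_ext1: "delim w = None # ext1 w" by (simp add: delim_def ext1_def)

lemma idx_dec:
  assumes "w = u @ [a] @ m @ [b] @ v"
  shows "w ! length u = a" "w ! (Suc (length u + length m)) = b" "Suc (length u + length m) < length w"
    "\<And>t. t < length m \<Longrightarrow> w ! (Suc (length u) + t) = m ! t"
  using assms by (auto simp: nth_append)

lemma in_range:
  assumes "w = u @ [a] @ m @ [b] @ v" "length u < t" "t < Suc (length u + length m)"
  shows "w ! t \<in> set m"
proof -
  obtain t' where t: "t = Suc (length u) + t'" "t' < length m" using assms(2,3)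
    by (metis add_less_cancel_left le_add_diff_inverse less_eq_Suc_le plus_nat.simps(2))
  then show ?thesis using idx_dec(4)[OF assms(1)] by simp
qed

lemma obst_not_uniq:
  assumes "w \<in> L_OBST"
  shows "w \<notin> L_UNIQ"
proof -
  obtain x a b where ax: "a \<noteq> x" and bx: "b \<noteq> x" and I: "w \<in> I_lang x a b" and J: "w \<in> J_lang x a b"
    using assms by (auto simp: L_OBST_def K_lang_def)
  obtain u1 m v1 where w1: "w = u1 @ [a] @ (x # m) @ [b] @ v1" and ma: "set m \<subseteq> - {a}"
    using I by (auto simp: I_lang_def)
  obtain u2 m' v2 where w2: "w = u2 @ [a] @ m' @ [b] @ v2" and mx: "set m' \<subseteq> - {x}"
    using J by (auto simp: J_lang_def)
  define i where "i = length u1"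
  define j where "j = Suc (length u1 + length (x # m))"
  define k where "k = length u2"
  define l where "l = Suc (length u2 + length m')"
  have wi: "w!i = a" "w!j = b" "j < length w" using idx_dec[OF w1] by (simp_all add: i_def j_def)
  have wSi: "w ! Suc i = x" using idx_dec(4)[OF w1, of 0] by (simp add: i_def)
  have ij: "Suc i < j" by (simp add: i_def j_def)
  have noa: "\<And>t. Suc i < t \<Longrightarrow> t < j \<Longrightarrow> w ! t \<noteq> a"
  proof -
    fix t assume t: "Suc i < t" "t < j"
    have w1': "w = (u1 @ [a]) @ [x] @ m @ [b] @ v1" using w1 by simp
    have "w ! t \<in> set m" using in_range[OF w1', of t] t by (simp add: i_def j_def)
    then show "w ! t \<noteq> a" using ma by auto
  qed
  have wk: "w!k = a" "w!l = b" "l < length w" using idx_dec[OF w2] by (simp_all add: k_def l_def)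
  have kl: "k < l" by (simp add: k_def l_def)
  have nox: "\<And>t. k < t \<Longrightarrow> t < l \<Longrightarrow> w ! t \<noteq> x"
    using in_range[OF w2] mx by (auto simp: k_def l_def)
  have wSk: "w ! Suc k \<noteq> x"
  proof (cases "Suc k < l")
    case True then show ?thesis using nox by simp
  next
    case False then have "Suc k = l" using kl by simp
    then show ?thesis using wk bx by simp
  qed
  have "\<exists>v. v \<noteq> w \<and> bg (None # ext1 v) = bg (None # ext1 w)"
  proof (cases "k < i")
    case True
    have "l \<le> i"
    proof (rule ccontr)
      assume "\<not> l \<le> i"
      then show False
      proof (cases "Suc i < l")
        case True then show False using nox[of "Suc i"] \<open>k < i\<close> wSi by simp
      next
        case False then have "Suc i = l" using \<open>\<not> l \<le> i\<close> by simp
        then show False using wk wSi bx by simp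
      qed
    qed
    show ?thesis
      apply (rule swap_idx[of k l i j])
      using kl \<open>l \<le> i\<close> ij wi wk wSi wSk by auto
  next
    case False
    have "k \<noteq> i" using wSk wSi by auto
    then have "i < k" using False by simp
    have "k \<noteq> Suc i" using wk wSi ax by auto
    have "j \<le> k"
    proof (rule ccontr)
      assume "\<not> j \<le> k"
      then show False using noa[of k] \<open>i < k\<close> \<open>k \<noteq> Suc i\<close> wk by simp
    qed
    show ?thesis
      apply (rule swap_idx[of i j k l])
      using kl \<open>j \<le> k\<close> ij wi wk wSi wSk by auto
  qed
  then obtain v where v: "v \<noteq> w" "bg (None # ext1 v) = bg (None # ext1 w)" by blast
  have "delim v \<noteq> delim w" using v(1) by (simp add: delim_def)
  moreover have "bigram (delim v) = bigram (delim w)" using v(2) by (simp add: bigram_eq_iff delim_ext1)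
  ultimately show ?thesis unfolding L_UNIQ_def by blast
qed

lemma obst_intro:
  assumes "a \<noteq> x" "b \<noteq> x" "W = u @ [a, x] @ m @ [b] @ v" "a \<notin> set m"
    "W = u' @ [a] @ m' @ [b] @ v'" "x \<notin> set m'"
  shows "W \<in> L_OBST"
proof -
  have "W \<in> I_lang x a b" using assms(3,4) unfolding I_lang_def by blast
  moreover have "W \<in> J_lang x a b" using assms(5,6) unfolding J_lang_def by blast
  ultimately show ?thesis using assms(1,2) unfolding L_OBST_def K_lang_def by blast
qed

lemma obst_Cons: "w \<in> L_OBST \<Longrightarrow> c # w \<in> L_OBST"
proof -
  assume "w \<in> L_OBST"
  then obtain x a b where ab: "a \<noteq> x" "b \<noteq> x" and I: "w \<in> I_lang x a b" and J: "w \<in> J_lang x a b"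
    by (auto simp: L_OBST_def K_lang_def)
  obtain u m v where 1: "w = u @ [a, x] @ m @ [b] @ v" "set m \<subseteq> - {a}" using I by (auto simp: I_lang_def)
  obtain u' m' v' where 2: "w = u' @ [a] @ m' @ [b] @ v'" "set m' \<subseteq> - {x}" using J by (auto simp: J_lang_def)
  show ?thesis
    apply (rule obst_intro[of a x b _ "c # u" m v "c # u'" m' v'])
    using ab 1 2 by auto
qed

lemma set_bg: "set_mset (bg s) = set (zip s (tl s))" by (simp add: bg_def)

lemma zip_Cons_tl: "set (zip (y # t) t) \<subseteq> insert (y, hd t) (set (zip t (tl t)))"
  by (cases t) auto

lemma zip_Cons_tl2: "set (zip t (tl t)) \<subseteq> set (zip (y # t) t)"
  by (cases t) auto

lemma ext1_Cons: "ext1 (y # w) = Some y # ext1 w" by (simp add: ext1_def)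
lemma ext1_ne: "ext1 w \<noteq> []" by (simp add: ext1_def)

lemma occ: "(Some c, Some e) \<in> set (zip (ext1 W) (tl (ext1 W))) \<Longrightarrow> \<exists>p1 p2. W = p1 @ c # e # p2"
proof (induction W)
  case Nil then show ?case by (simp add: ext1_def)
next
  case (Cons y W)
  have "(Some c, Some e) \<in> insert (Some y, hd (ext1 W)) (set (zip (ext1 W) (tl (ext1 W))))"
    using Cons.prems zip_Cons_tl[of "Some y" "ext1 W"] by (auto simp: ext1_Cons)
  then show ?case
  proof
    assume h: "(Some c, Some e) = (Some y, hd (ext1 W))"
    then have "W \<noteq> []" by (auto simp: ext1_def)
    then obtain W' where "W = e # W'" using h by (cases W) (auto simp: ext1_def)
    then show ?thesis using h by (metis append_Nil prod.inject option.inject)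
  next
    assume "(Some c, Some e) \<in> set (zip (ext1 W) (tl (ext1 W)))"
    then obtain p1 p2 where "W = p1 @ c # e # p2" using Cons.IH by blast
    then show ?thesis by (metis append_Cons)
  qed
qed

lemma no_None_fst: "(None, b) \<notin> set (zip (ext1 w) (tl (ext1 w)))"
proof (induction w)
  case Nil then show ?case by (simp add: ext1_def)
next
  case (Cons y w)
  then show ?case using zip_Cons_tl[of "Some y" "ext1 w"] by (auto simp: ext1_Cons)
qed

definition closedS :: "'b option set \<Rightarrow> 'b option list \<Rightarrow> bool" where
  "closedS S s = (\<forall>p \<in> set (zip s (tl s)). fst p \<in> S \<longrightarrow> snd p \<in> S \<or> snd p = None)"

lemma closed_app:
  assumes "\<forall>y \<in> set A. y \<notin> S" "\<forall>y \<in> set B. y \<in> S \<or> y = None"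
  shows "closedS S (A @ B)"
  using assms
proof (induction A)
  case Nil
  then show ?case by (cases B) (auto simp: closedS_def dest!: set_zip_rightD)
next
  case (Cons y A)
  then have "closedS S (A @ B)" by simp
  show ?case unfolding closedS_def
  proof
    fix p assume p: "p \<in> set (zip ((y # A) @ B) (tl ((y # A) @ B)))"
    show "fst p \<in> S \<longrightarrow> snd p \<in> S \<or> snd p = None"
    proof (cases "p = (y, hd (A @ B))")
      case True then show ?thesis using Cons.prems by simp
    next
      case False
      then have "p \<in> set (zip (A @ B) (tl (A @ B)))" using p zip_Cons_tl[of y "A @ B"] by auto
      with \<open>closedS S (A @ B)\<close> show ?thesis unfolding closedS_def by auto
    qed
  qed
qed

lemma closed_prop:
  assumes "x \<in> S" "None \<notin> S" "closedS S (x # map Some v @ [None])"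
  shows "Some ` set v \<subseteq> S"
  using assms
proof (induction v arbitrary: x)
  case Nil then show ?case by simp
next
  case (Cons y v)
  have "(x, Some y) \<in> set (zip (x # map Some (y # v) @ [None]) (tl (x # map Some (y # v) @ [None])))"
    by simp
  then have yS: "Some y \<in> S" using Cons.prems unfolding closedS_def by fastforce
  have "closedS S (Some y # map Some v @ [None])"
    using Cons.prems(3) zip_Cons_tl2[of "Some y # map Some v @ [None]" x] unfolding closedS_def by auto
  then have "Some ` set v \<subseteq> S" using Cons.IH yS Cons.prems(2) by blast
  then show ?case using yS by simp
qed

lemma closedS_mono: "set (zip t (tl t)) \<subseteq> set (zip s (tl s)) \<Longrightarrow> closedS S s \<Longrightarrow> closedS S t"
  unfolding closedS_def by auto

lemma core:
  assumes eq: "bg (ext1 (c # d # w2)) = bg (ext1 (c # e # v2))" and de: "d \<noteq> e"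
  shows "c # d # w2 \<in> L_OBST"
proof -
  define W where "W = c # d # w2"
  have setW: "set (zip (ext1 W) (tl (ext1 W))) = set (zip (ext1 (c#e#v2)) (tl (ext1 (c#e#v2))))"
    using arg_cong[OF eq, of set_mset] by (simp add: W_def set_bg)
  have "(Some c, Some e) \<in> set (zip (ext1 (c#e#v2)) (tl (ext1 (c#e#v2))))" by (simp add: ext1_def)
  then obtain p1 p2 where Wp: "W = p1 @ c # e # p2" using occ setW by metis
  have p1ne: "p1 \<noteq> []"
  proof
    assume "p1 = []" then show False using Wp de by (simp add: W_def)
  qed
  then obtain p1' where p1: "p1 = c # p1'" using Wp by (cases p1) (auto simp: W_def)
  have Wc: "W = c # d # w2" by (simp add: W_def)
  have "W \<in> L_OBST"
  proof (cases "e = c")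
    case True
    have "p1' \<noteq> []"
    proof
      assume "p1' = []" then show False using Wp p1 True de by (simp add: W_def)
    qed
    then obtain p1'' where p1': "p1' = d # p1''" using Wp p1 by (cases p1') (auto simp: W_def)
    then have "w2 = p1'' @ c # c # p2" using Wp p1 True by (simp add: W_def)
    then have "c \<in> set w2" by simp
    then obtain m r where mr: "w2 = m @ c # r" "c \<notin> set m" by (meson split_list_first)
    show ?thesis
      apply (rule obst_intro[of c d c W "[]" m r p1 "[]" p2])
      using True de mr Wp by (auto simp: W_def)
  next
    case ce: False
    show ?thesis
    proof (cases "\<exists>q1 q2. W = q1 @ c # e # q2 \<and> q1 \<noteq> [] \<and> c \<in> set q2")
      case True
      then obtain q1 q2 where q: "W = q1 @ c # e # q2" "q1 \<noteq> []" "c \<in> set q2" by blast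
      obtain m2 r2 where m2: "q2 = m2 @ c # r2" "c \<notin> set m2" using q(3) by (meson split_list_first)
      show ?thesis
      proof (cases "d = c")
        case True
        show ?thesis
          apply (rule obst_intro[of c e c W q1 m2 r2 "[]" "[]" w2])
          using True ce q m2 by (auto simp: W_def)
      next
        case dc: False
        obtain q1' where q1: "q1 = c # q1'" using q by (cases q1) (auto simp: W_def)
        have "q1' \<noteq> []"
        proof
          assume "q1' = []" then show False using q q1 dc by (simp add: W_def)
        qed
        then obtain q1'' where "q1' = d # q1''" using q q1 by (cases q1') (auto simp: W_def)
        then have "w2 = q1'' @ c # e # q2" using q q1 by (simp add: W_def)
        then have "c \<in> set w2" by simp
        then obtain m r where mr: "w2 = m @ c # r" "c \<notin> set m" by (meson split_list_first)
        show ?thesis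
        proof (cases "e \<in> set m")
          case True
          then obtain m1 m3 where mm: "m = m1 @ e # m3" by (meson split_list)
          show ?thesis
            apply (rule obst_intro[of c d e W "[]" m1 "m3 @ c # r" q1 "[]" q2])
            using dc de mm mr q by (auto simp: W_def)
        next
          case False
          show ?thesis
            apply (rule obst_intro[of c e c W q1 m2 r2 "[]" "d # m" r])
            using False ce de m2 mr q by (auto simp: W_def)
        qed
      qed
    next
      case nA: False
      have cp2: "c \<notin> set p2" using nA Wp p1ne by blast
      define U where "U = set (e # p2)"
      have cU: "c \<notin> U" using ce cp2 by (auto simp: U_def)
      show ?thesis
      proof (cases "\<exists>u \<in> set p1. u \<in> U")
        case True
        then obtain u where u: "u \<in> set p1" "u \<in> U" by blast
        have uc: "u \<noteq> c" using cU u by auto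
        then have "u \<in> set p1'" using p1 u by simp
        then obtain y1 y2 where y: "p1' = y1 @ u # y2" by (meson split_list)
        have "c \<in> set (c # y1)" by simp
        then obtain \<alpha> m where cy: "c # y1 = \<alpha> @ c # m" "c \<notin> set m" by (meson split_list_last)
        have Wd: "W = \<alpha> @ c # (m @ [u]) @ y2 @ c # e # p2"
        proof -
          have "W = (c # y1) @ u # y2 @ c # e # p2" using Wp p1 y by simp
          then show ?thesis using cy by simp
        qed
        show ?thesis
        proof (cases "e \<in> set (m @ [u])")
          case True
          then obtain m1 m2 where mm: "m @ [u] = m1 @ e # m2" "e \<notin> set m1" by (meson split_list_first)
          have cm1: "c \<notin> set m1"
          proof -
            have "c \<notin> set (m @ [u])" using cy uc by simp
            then show ?thesis using mm by simp
          qed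
          show ?thesis
          proof (cases m1)
            case Nil
            then have W2: "W = \<alpha> @ c # e # (m2 @ y2 @ c # e # p2)" using Wd mm by simp
            show ?thesis
            proof (cases "\<alpha> = []")
              case True then show ?thesis using W2 de by (simp add: W_def)
            next
              case False
              have "c \<in> set (m2 @ y2 @ c # e # p2)" by simp
              then show ?thesis using W2 nA False by blast
            qed
          next
            case (Cons t m1')
            show ?thesis
              apply (rule obst_intro[of c t e W \<alpha> m1' "m2 @ y2 @ c # e # p2" p1 "[]" p2])
              using Cons mm cm1 Wd Wp by auto
          qed
        next
          case False
          then have "u \<noteq> e" by auto
          then have "u \<in> set p2" using u(2) by (simp add: U_def)
          then obtain \<gamma> \<delta> where gd: "p2 = \<gamma> @ u # \<delta>" by (meson split_list)
          show ?thesis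
            apply (rule obst_intro[of c e u W p1 \<gamma> \<delta> \<alpha> m "y2 @ c # e # p2"])
            using ce \<open>u \<noteq> e\<close> gd cp2 Wp Wd False by auto
        qed
      next
        case False
        define S where "S = Some ` U"
        have "ext1 W = map Some (p1 @ [c]) @ (map Some (e # p2) @ [None])"
          using Wp by (simp add: ext1_def)
        moreover have "\<forall>y \<in> set (map Some (p1 @ [c])). y \<notin> S" using False cU by (auto simp: S_def)
        moreover have "\<forall>y \<in> set (map Some (e # p2) @ [None]). y \<in> S \<or> y = None"
          by (auto simp: S_def U_def)
        ultimately have "closedS S (ext1 W)" using closed_app by metis
        then have "closedS S (ext1 (c # e # v2))" using setW unfolding closedS_def by simp
        then have "closedS S (Some e # map Some v2 @ [None])"
          by (rule closedS_mono[rotated]) (auto simp: ext1_def)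
        then have "Some ` set v2 \<subseteq> S" using closed_prop[of "Some e" S v2] by (auto simp: S_def U_def)
        then have cv2: "c \<notin> set v2" using cU by (auto simp: S_def)
        have "(Some c, Some d) \<in> set (zip (ext1 W) (tl (ext1 W)))" by (simp add: W_def ext1_def)
        then have "(Some c, Some d) \<in> set (zip (ext1 (c#e#v2)) (tl (ext1 (c#e#v2))))" using setW by simp
        then have "(Some c, Some d) \<in> insert (Some c, Some e) (set (zip (Some e # map Some v2 @ [None]) (map Some v2 @ [None])))"
          by (simp add: ext1_def)
        then have "Some c \<in> set (Some e # map Some v2 @ [None])" using de by (auto dest: set_zip_leftD)
        then show ?thesis using ce cv2 by auto
      qed
    qed
  qed
  then show ?thesis by (simp add: W_def)
qed

lemma length_from_bg: "bg s = bg t \<Longrightarrow> length s - 1 = length t - 1"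
  by (metis size_bg)

lemma uniq_aux: "bg (ext1 (c # w)) = bg (ext1 (c # v)) \<Longrightarrow> c # w \<notin> L_OBST \<Longrightarrow> w = v"
proof (induction w arbitrary: c v)
  case Nil
  then have "length (ext1 [c]) - 1 = length (ext1 (c # v)) - 1" using length_from_bg by blast
  then show ?case by (simp add: ext1_def)
next
  case (Cons d w)
  have "length (ext1 (c # d # w)) - 1 = length (ext1 (c # v)) - 1" using Cons.prems(1) length_from_bg by blast
  then obtain e v' where v: "v = e # v'" by (cases v) (auto simp: ext1_def)
  show ?case
  proof (cases "d = e")
    case True
    have "bg (ext1 (d # w)) = bg (ext1 (d # v'))"
      using Cons.prems(1) True v by (simp add: ext1_Cons)
    moreover have "d # w \<notin> L_OBST" using Cons.prems(2) obst_Cons by blast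
    ultimately have "w = v'" using Cons.IH by blast
    then show ?thesis using True v by simp
  next
    case False
    then have "c # d # w \<in> L_OBST" using core Cons.prems(1) v by blast
    then show ?thesis using Cons.prems(2) by blast
  qed
qed

lemma notobst_uniq:
  assumes "w \<notin> L_OBST"
  shows "w \<in> L_UNIQ"
  unfolding L_UNIQ_def
proof (intro CollectI allI impI, elim conjE exE)
  fix z v
  assume zv: "z = delim v" and bz: "bigram z = bigram (delim w)"
  then have eq: "bg (None # ext1 v) = bg (None # ext1 w)" by (simp add: bigram_eq_iff delim_ext1)
  have len: "length (None # ext1 v) - 1 = length (None # ext1 w) - 1" using eq length_from_bg by blast
  show "z = delim w"
  proof (cases w)
    case Nil
    then show ?thesis using len zv by (simp add: ext1_def delim_def)
  next
    case (Cons c w')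
    then obtain c' v' where v: "v = c' # v'" using len by (cases v) (auto simp: ext1_def)
    have eq2: "add_mset (None, Some c') (bg (ext1 (c' # v'))) = add_mset (None, Some c) (bg (ext1 (c # w')))"
      using eq v Cons by (simp add: bg_Cons ext1_ne ext1_Cons)
    have "c' = c"
    proof (rule ccontr)
      assume "c' \<noteq> c"
      then have "(None, Some c') \<in># bg (ext1 (c # w'))" using eq2
        by (metis insert_noteq_member prod.inject option.inject)
      then show False using no_None_fst by (metis set_bg)
    qed
    then have "bg (ext1 (c # v')) = bg (ext1 (c # w'))" using eq2 by simp
    then have "w' = v'" using uniq_aux assms Cons by metis
    then show ?thesis using zv v Cons \<open>c' = c\<close> by simp
  qed
qed

theorem theorem2:
  shows "(L_UNIQ :: ('a::finite) list set) = UNIV - L_OBST"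
  using obst_not_uniq notobst_uniq by blast

end
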